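(* Let $n\geqslant 2$ be an integer. Every tournament $T$ with $2n$ vertices that embeds a transitive tournament with $2n-1$ vertices is decomposable.
   Context: A tournament $T=(V,A)$ is a finite set $V$ with a set $A$ of ordered pairs of distinct vertices such that for all $x\neq y$, exactly one of $(x,y),(y,x)$ lies in $A$; write $x\to y$ for $(x,y)\in A$. For $X\subseteq V$, $T[X]$ is the induced subtournament. $T$ embeds $T'$ if $T'$ is isomorphic to an induced subtournament of $T$. A tournament is transitive if $x\to y$ and $y\to z$ imply $x\to z$. A subset $I\subseteq V$ is an interval of $T$ if for every $x\in V\setminus I$, either $x\to a$ for all $a\in I$ or $a\to x$ for all $a\in I$. The sets $\varnothing$, $V$ and singletons are trivial intervals. A tournament with at least 3 vertices is indecomposable if all its intervals are trivial, and decomposable otherwise. *)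

theory Defs
  imports Main
begin

definition tournament :: "'a set \<Rightarrow> ('a \<times> 'a) set \<Rightarrow> bool" where
  "tournament V A \<longleftrightarrow> finite V \<and> A \<subseteq> V \<times> V \<and>
     (\<forall>x\<in>V. \<forall>y\<in>V. x \<noteq> y \<longrightarrow> ((x,y) \<in> A \<longleftrightarrow> (y,x) \<notin> A)) \<and>
     (\<forall>x. (x,x) \<notin> A)"

definition induced :: "('a \<times> 'a) set \<Rightarrow> 'a set \<Rightarrow> ('a \<times> 'a) set" where
  "induced A X = A \<inter> (X \<times> X)"

definition embeds :: "'a set \<Rightarrow> ('a \<times> 'a) set \<Rightarrow> 'b set \<Rightarrow> ('b \<times> 'b) set \<Rightarrow> bool" where
  "embeds V A V' A' \<longleftrightarrow> (\<exists>X f. X \<subseteq> V \<and> bij_betw f V' X \<and>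
     (\<forall>x\<in>V'. \<forall>y\<in>V'. (x,y) \<in> A' \<longleftrightarrow> (f x, f y) \<in> induced A X))"

definition transitive_tournament :: "'a set \<Rightarrow> ('a \<times> 'a) set \<Rightarrow> bool" where
  "transitive_tournament V A \<longleftrightarrow> tournament V A \<and>
     (\<forall>x y z. (x,y) \<in> A \<and> (y,z) \<in> A \<longrightarrow> (x,z) \<in> A)"

definition is_interval :: "'a set \<Rightarrow> ('a \<times> 'a) set \<Rightarrow> 'a set \<Rightarrow> bool" where
  "is_interval V A I \<longleftrightarrow> I \<subseteq> V \<and>
     (\<forall>x\<in>V - I. (\<forall>a\<in>I. (x,a) \<in> A) \<or> (\<forall>a\<in>I. (a,x) \<in> A))"

definition trivial_interval :: "'a set \<Rightarrow> 'a set \<Rightarrow> bool" where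
  "trivial_interval V I \<longleftrightarrow> I = {} \<or> I = V \<or> (\<exists>x. I = {x})"

definition indecomposable :: "'a set \<Rightarrow> ('a \<times> 'a) set \<Rightarrow> bool" where
  "indecomposable V A \<longleftrightarrow> card V \<ge> 3 \<and>
     (\<forall>I. is_interval V A I \<longrightarrow> trivial_interval V I)"

definition decomposable :: "'a set \<Rightarrow> ('a \<times> 'a) set \<Rightarrow> bool" where
  "decomposable V A \<longleftrightarrow> card V \<ge> 3 \<and> \<not> indecomposable V A"

end

theory Submission
  imports Defs
begin

lemma rank_lemma:
  fixes X :: "'a set" and A :: "('a \<times> 'a) set"
  assumes fin: "finite X"
    and irr: "\<And>x. (x,x) \<notin> A"
    and tot: "\<And>x y. x \<in> X \<Longrightarrow> y \<in> X \<Longrightarrow> x \<noteq> y \<Longrightarrow> (x,y) \<in> A \<or> (y,x) \<in> A"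
    and tr: "\<And>a b c. a \<in> X \<Longrightarrow> b \<in> X \<Longrightarrow> c \<in> X \<Longrightarrow> (a,b) \<in> A \<Longrightarrow> (b,c) \<in> A \<Longrightarrow> (a,c) \<in> A"
  defines "r \<equiv> (\<lambda>x. card {y\<in>X. (y,x) \<in> A})"
  shows "\<And>x y. x \<in> X \<Longrightarrow> y \<in> X \<Longrightarrow> (x,y) \<in> A \<Longrightarrow> r x < r y"
    and "bij_betw r X {..<card X}"
proof -
  show mono: "r x < r y" if "x \<in> X" "y \<in> X" "(x,y) \<in> A" for x y
  proof -
    have "{z\<in>X. (z,x) \<in> A} \<subset> {z\<in>X. (z,y) \<in> A}"
      using that tr irr by blast
    then show ?thesis unfolding r_def by (intro psubset_card_mono) (use fin in auto)
  qed
  have inj: "inj_on r X"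
  proof (rule inj_onI)
    fix x y assume "x \<in> X" "y \<in> X" "r x = r y"
    then show "x = y" using tot[of x y] mono[of x y] mono[of y x] by fastforce
  qed
  have sub: "r ` X \<subseteq> {..<card X}"
  proof
    fix k assume "k \<in> r ` X"
    then obtain x where x: "x \<in> X" "k = r x" by auto
    have "{z\<in>X. (z,x) \<in> A} \<subset> X" using x irr by blast
    then show "k \<in> {..<card X}" using x fin unfolding r_def by (simp add: psubset_card_mono)
  qed
  have "card (r ` X) = card X" using inj by (simp add: card_image)
  then have "r ` X = {..<card X}" using sub by (intro card_subset_eq) auto
  then show "bij_betw r X {..<card X}" using inj by (simp add: bij_betw_def)
qed

lemma alt_lemma:
  fixes p :: "nat \<Rightarrow> bool"
  assumes "\<And>i. i < k \<Longrightarrow> p i \<noteq> p (Suc i)"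
  shows "i \<le> k \<Longrightarrow> p i = (p 0 = even i)"
  using assms by (induction i) auto

theorem mainTheorem1:
  fixes n :: nat and V :: "'a set" and A :: "('a \<times> 'a) set"
    and V' :: "'b set" and A' :: "('b \<times> 'b) set"
  assumes "n \<ge> 2"
    and "tournament V A" and "card V = 2 * n"
    and "transitive_tournament V' A'" and "card V' = 2 * n - 1"
    and "embeds V A V' A'"
  shows "decomposable V A"
proof -
  define N where "N = 2 * n - 1"
  obtain X f where XV: "X \<subseteq> V" and bij: "bij_betw f V' X"
    and hom: "\<forall>x\<in>V'. \<forall>y\<in>V'. (x,y) \<in> A' \<longleftrightarrow> (f x, f y) \<in> induced A X"
    using assms(6) unfolding embeds_def by blast
  have finV: "finite V" and AV: "A \<subseteq> V \<times> V"
    and totV: "\<And>x y. x \<in> V \<Longrightarrow> y \<in> V \<Longrightarrow> x \<noteq> y \<Longrightarrow> ((x,y) \<in> A \<longleftrightarrow> (y,x) \<notin> A)"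
    and irr: "\<And>x. (x,x) \<notin> A"
    using assms(2) unfolding tournament_def by blast+
  have cX: "card X = N" using bij assms(5) N_def by (metis bij_betw_same_card)
  have finX: "finite X" using XV finV finite_subset by blast
  have trA': "\<And>x y z. (x,y) \<in> A' \<Longrightarrow> (y,z) \<in> A' \<Longrightarrow> (x,z) \<in> A'"
    using assms(4) unfolding transitive_tournament_def by blast
  have tr: "(a,c) \<in> A" if h: "a \<in> X" "b \<in> X" "c \<in> X" "(a,b) \<in> A" "(b,c) \<in> A" for a b c
  proof -
    obtain a' where a': "a' \<in> V'" "f a' = a" using bij h(1) unfolding bij_betw_def by blast
    obtain b' where b': "b' \<in> V'" "f b' = b" using bij h(2) unfolding bij_betw_def by blast
    obtain c' where c': "c' \<in> V'" "f c' = c" using bij h(3) unfolding bij_betw_def by blast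
    have "(a',b') \<in> A'" "(b',c') \<in> A'" using hom a' b' c' h unfolding induced_def by auto
    then have "(a',c') \<in> A'" using trA' by blast
    then show ?thesis using hom a' c' unfolding induced_def by auto
  qed
  have tot: "(x,y) \<in> A \<or> (y,x) \<in> A" if "x \<in> V" "y \<in> V" "x \<noteq> y" for x y
    using totV[OF that] by blast
  have "card (V - X) = 1" using cX N_def assms(1,3) XV finX by (simp add: card_Diff_subset)
  then obtain v where vX: "V - X = {v}" using card_1_singletonE by blast
  then have vV: "v \<in> V" and vnX: "v \<notin> X" by auto
  have Veq: "V = insert v X" using vX XV by auto
  define r where "r = (\<lambda>x. card {y\<in>X. (y,x) \<in> A})"
  have mono: "\<And>x y. x \<in> X \<Longrightarrow> y \<in> X \<Longrightarrow> (x,y) \<in> A \<Longrightarrow> r x < r y"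
    and rb: "bij_betw r X {..<card X}"
    using rank_lemma[of X A, OF finX irr] tot XV tr unfolding r_def by blast+
  define g where "g = inv_into X r"
  have gX: "\<And>i. i < N \<Longrightarrow> g i \<in> X" and rg: "\<And>i. i < N \<Longrightarrow> r (g i) = i"
    using rb cX unfolding g_def
    by (auto simp: bij_betw_def inv_into_into f_inv_into_f)
  have rX: "\<And>x. x \<in> X \<Longrightarrow> r x < N" using rb cX by (auto simp: bij_betw_def)
  have below: "(x, g i) \<in> A" if "x \<in> X" "i < N" "r x < i" for x i
  proof -
    have "x \<noteq> g i" using that rg by auto
    then have "(x, g i) \<in> A \<or> (g i, x) \<in> A" using tot that gX XV by blast
    then show ?thesis using mono[of "g i" x] that gX rg by fastforce
  qed
  have above: "(g i, x) \<in> A" if "x \<in> X" "i < N" "r x > i" for x i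
  proof -
    have "x \<noteq> g i" using that rg by auto
    then have "(x, g i) \<in> A \<or> (g i, x) \<in> A" using tot that gX XV by blast
    then show ?thesis using mono[of x "g i"] that gX rg by fastforce
  qed
  have N3: "N \<ge> 3" using N_def assms(1) by simp
  have cV: "card V \<ge> 3" using assms(1,3) by simp
  have "\<exists>I. is_interval V A I \<and> \<not> trivial_interval V I"
  proof -
    have big: "\<not> trivial_interval V (V - {w})" if "w \<in> X" for w
    proof -
      have c: "card (V - {w}) = 2 * n - 1" using that XV assms(3) finV by auto
      have n1: "V - {w} \<noteq> V" using that XV by auto
      have n2: "V - {w} \<noteq> {}"
      proof
        assume "V - {w} = {}"
        then have "card (V - {w}) = card ({}::'a set)" by (rule arg_cong)
        with c assms(1) show False by simp
      qed
      have n3: "V - {w} \<noteq> {x}" for x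
      proof
        assume "V - {w} = {x}"
        then have "card (V - {w}) = card {x}" by (rule arg_cong)
        with c assms(1) show False by simp
      qed
      from n1 n2 n3 have "V - {w} \<noteq> V" "V - {w} \<noteq> {}" "\<forall>x. V - {w} \<noteq> {x}" by auto
      then show ?thesis unfolding trivial_interval_def by blast
    qed
    consider "(v, g (N-1)) \<in> A" | "(g 0, v) \<in> A" | "(v, g (N-1)) \<notin> A" "(g 0, v) \<notin> A" by blast
    then show ?thesis
    proof cases
      case 1
      let ?m = "g (N-1)"
      have m: "?m \<in> X" "r ?m = N - 1" using gX rg N3 by auto
      have "is_interval V A (V - {?m})"
        unfolding is_interval_def
      proof (intro conjI ballI disjI2)
        fix x a assume x: "x \<in> V - (V - {?m})" and a: "a \<in> V - {?m}"
        have "x = ?m" using x by auto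
        show "(a, x) \<in> A"
        proof (cases "a = v")
          case True then show ?thesis using 1 \<open>x = ?m\<close> by simp
        next
          case False
          then have "a \<in> X" using a Veq by auto
          moreover have "r a \<noteq> N - 1" using a m rb cX \<open>a \<in> X\<close> by (auto simp: bij_betw_def inj_on_def)
          ultimately show ?thesis using below[of a "N-1"] rX[of a] N3 \<open>x = ?m\<close> by fastforce
        qed
      qed auto
      then show ?thesis using big m by blast
    next
      case 2
      let ?m = "g 0"
      have m: "?m \<in> X" "r ?m = 0" using gX rg N3 by auto
      have "is_interval V A (V - {?m})"
        unfolding is_interval_def
      proof (intro conjI ballI disjI1)
        fix x a assume x: "x \<in> V - (V - {?m})" and a: "a \<in> V - {?m}"
        have "x = ?m" using x by auto
        show "(x, a) \<in> A"
        proof (cases "a = v")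
          case True then show ?thesis using 2 \<open>x = ?m\<close> by simp
        next
          case False
          then have "a \<in> X" using a Veq by auto
          moreover have "r a \<noteq> 0"
          proof
            assume "r a = 0"
            then have "r a = r ?m" using m by simp
            moreover have "inj_on r X" using rb by (simp add: bij_betw_def)
            ultimately have "a = ?m" using m \<open>a \<in> X\<close> by (blast dest: inj_onD)
            then show False using a by simp
          qed
          ultimately show ?thesis using above[of a 0] N3 \<open>x = ?m\<close> by fastforce
        qed
      qed auto
      then show ?thesis using big m by blast
    next
      case 3
      have v0: "(v, g 0) \<in> A" using 3 tot[of v "g 0"] vV gX[of 0] XV N3 vnX by auto
      have "\<exists>i < N - 1. ((v, g i) \<in> A) = ((v, g (Suc i)) \<in> A)"
      proof (rule ccontr)
        assume "\<not> ?thesis"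
        then have "\<And>i. i < N - 1 \<Longrightarrow> ((v, g i) \<in> A) \<noteq> ((v, g (Suc i)) \<in> A)" by blast
        from alt_lemma[where p = "\<lambda>i. (v, g i) \<in> A", OF this, of "N-1"]
        have "((v, g (N-1)) \<in> A) = even (N - 1)" using v0 by simp
        moreover have "even (N - 1)" using N_def assms(1) by simp
        ultimately show False using 3 by simp
      qed
      then obtain i where i: "i < N - 1" and eq: "((v, g i) \<in> A) = ((v, g (Suc i)) \<in> A)" by blast
      let ?I = "{g i, g (Suc i)}"
      have gi: "g i \<in> X" "g (Suc i) \<in> X" "r (g i) = i" "r (g (Suc i)) = Suc i"
        using i gX rg by auto
      have "is_interval V A ?I"
        unfolding is_interval_def
      proof (intro conjI ballI)
        show "?I \<subseteq> V" using gi XV by auto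
      next
        fix x assume x: "x \<in> V - ?I"
        show "(\<forall>a\<in>?I. (x, a) \<in> A) \<or> (\<forall>a\<in>?I. (a, x) \<in> A)"
        proof (cases "x = v")
          case True
          have ne: "v \<noteq> g i" "v \<noteq> g (Suc i)" using gi vnX by auto
          show ?thesis
          proof (cases "(v, g i) \<in> A")
            case True then show ?thesis using eq \<open>x = v\<close> by auto
          next
            case False
            then have "(g i, v) \<in> A" "(g (Suc i), v) \<in> A"
              using eq tot[of v "g i"] tot[of v "g (Suc i)"] ne vV gi XV by auto
            then show ?thesis using \<open>x = v\<close> by auto
          qed
        next
          case False
          then have xX: "x \<in> X" using x Veq by auto
          have "r x \<noteq> i" "r x \<noteq> Suc i" using x gi xX rb cX by (auto simp: bij_betw_def inj_on_def)
          then have "r x < i \<or> r x > Suc i" by auto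
          then show ?thesis
          proof
            assume "r x < i" then show ?thesis using below[of x i] below[of x "Suc i"] xX i by auto
          next
            assume "r x > Suc i" then show ?thesis using above[of x i] above[of x "Suc i"] xX i by auto
          qed
        qed
      qed
      moreover have "\<not> trivial_interval V ?I"
      proof -
        have "g i \<noteq> g (Suc i)" using gi by auto
        moreover have "card ?I = 2" using calculation by simp
        ultimately show ?thesis unfolding trivial_interval_def using assms(1,3) by auto
      qed
      ultimately show ?thesis by blast
    qed
  qed
  then show ?thesis unfolding decomposable_def indecomposable_def using cV by blast
qed

end
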